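(* For every formula $\phi$, $\vdash_{\mathsf{BB'IW}}\phi$ if and only if $\phi$ is $\Lambda_{\mathrm{NF}}$-inhabited.
   Context: Formulas are built from propositional atoms with $\to$. $\vdash_{\mathsf{BB'IW}}\phi$ means that $\phi$ is derivable by modus ponens from the axioms consisting of all instances of $(\chi\to\psi)\to((\phi\to\chi)\to(\phi\to\psi))$ (${\sf B}$), $(\phi\to\chi)\to((\chi\to\psi)\to(\phi\to\psi))$ (${\sf B'}$), $\phi\to\phi$ (${\sf I}$), $(\phi\to(\phi\to\chi))\to(\phi\to\chi)$ (${\sf W}$); equivalently, some combinator over the basis ${\sf B},{\sf B'},{\sf I},{\sf W}$ has type $\phi$. Let $\mathcal X$ be a countably infinite set of variables with an injective map $\mathcal O:\mathcal X\to\mathbb N$; write $x<y$ iff $\mathcal O(x)<\mathcal O(y)$. Terms are terms of pure $\lambda$-calculus over $\mathcal X$, not identified up to $\alpha$-conversion; two distinct $\lambda$'s never bind the same variable and no variable is both free and bound in a term. HRM terms: every variable; $\lambda x.M$ if $M$ is HRM and $x$ is the greatest free variable of $M$; $(MN)$ if $M,N$ are HRM and for each free variable $x$ of $M$ there is a free variable $y$ of $N$ with $x\le y$. Fix $\Omega$ from variables to formulas with $\Omega^{-1}(\phi)$ infinite for all $\phi$. Typing: $x:\Omega(x)$; if $x:\chi$, $M:\psi$ and $\lambda x.M$ is HRM then $\lambda x.M:\chi\to\psi$; if $M:\chi\to\psi$, $N:\chi$, $(MN)$ HRM then $(MN):\psi$. $\Lambda_{\mathrm{NF}}$ is the set of typed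 terms in $\beta$-normal form; $\phi$ is $\Lambda_{\mathrm{NF}}$-inhabited if some closed term of $\Lambda_{\mathrm{NF}}$ has type $\phi$. *)

theory Defs
  imports Main
begin

datatype 'a form = Atom 'a | Imp "'a form" "'a form" (infixr "\<rightarrow>\<^sub>f" 25)

inductive BBIW_derivable :: "'a form \<Rightarrow> bool" where
  ax_B: "BBIW_derivable ((\<chi> \<rightarrow>\<^sub>f \<psi>) \<rightarrow>\<^sub>f ((\<phi> \<rightarrow>\<^sub>f \<chi>) \<rightarrow>\<^sub>f (\<phi> \<rightarrow>\<^sub>f \<psi>)))"
| ax_B': "BBIW_derivable ((\<phi> \<rightarrow>\<^sub>f \<chi>) \<rightarrow>\<^sub>f ((\<chi> \<rightarrow>\<^sub>f \<psi>) \<rightarrow>\<^sub>f (\<phi> \<rightarrow>\<^sub>f \<psi>)))"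
| ax_I: "BBIW_derivable (\<phi> \<rightarrow>\<^sub>f \<phi>)"
| ax_W: "BBIW_derivable ((\<phi> \<rightarrow>\<^sub>f (\<phi> \<rightarrow>\<^sub>f \<chi>)) \<rightarrow>\<^sub>f (\<phi> \<rightarrow>\<^sub>f \<chi>))"
| mp: "BBIW_derivable (\<phi> \<rightarrow>\<^sub>f \<psi>) \<Longrightarrow> BBIW_derivable \<phi> \<Longrightarrow> BBIW_derivable \<psi>"

datatype 'v trm = Var 'v | Lam 'v "'v trm" | App "'v trm" "'v trm"

fun FV :: "'v trm \<Rightarrow> 'v set" where
  "FV (Var x) = {x}"
| "FV (Lam x M) = FV M - {x}"
| "FV (App M N) = FV M \<union> FV N"

fun binders :: "'v trm \<Rightarrow> 'v list" where
  "binders (Var x) = []"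
| "binders (Lam x M) = x # binders M"
| "binders (App M N) = binders M @ binders N"

text \<open>Term convention: distinct lambdas bind distinct variables, and no variable
  is both free and bound.\<close>
definition wf_term :: "'v trm \<Rightarrow> bool" where
  "wf_term M \<longleftrightarrow> distinct (binders M) \<and> set (binders M) \<inter> FV M = {}"

definition closed :: "'v trm \<Rightarrow> bool" where
  "closed M \<longleftrightarrow> FV M = {}"

fun beta_normal :: "'v trm \<Rightarrow> bool" where
  "beta_normal (Var x) = True"
| "beta_normal (Lam x M) = beta_normal M"
| "beta_normal (App M N) = ((\<forall>x P. M \<noteq> Lam x P) \<and> beta_normal M \<and> beta_normal N)"

definition greatest_fv :: "('v \<Rightarrow> nat) \<Rightarrow> 'v \<Rightarrow> 'v trm \<Rightarrow> bool" where
  "greatest_fv ord x M \<longleftrightarrow> x \<in> FV M \<and> (\<forall>y\<in>FV M. ord y \<le> ord x)"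

inductive HRM :: "('v \<Rightarrow> nat) \<Rightarrow> 'v trm \<Rightarrow> bool" for ord where
  HRM_Var: "HRM ord (Var x)"
| HRM_Lam: "HRM ord M \<Longrightarrow> greatest_fv ord x M \<Longrightarrow> HRM ord (Lam x M)"
| HRM_App: "HRM ord M \<Longrightarrow> HRM ord N \<Longrightarrow> (\<forall>x\<in>FV M. \<exists>y\<in>FV N. ord x \<le> ord y)
            \<Longrightarrow> HRM ord (App M N)"

inductive has_type :: "('v \<Rightarrow> nat) \<Rightarrow> ('v \<Rightarrow> 'a form) \<Rightarrow> 'v trm \<Rightarrow> 'a form \<Rightarrow> bool"
  for ord \<Omega> where
  ty_Var: "has_type ord \<Omega> (Var x) (\<Omega> x)"
| ty_Lam: "has_type ord \<Omega> M \<psi> \<Longrightarrow> HRM ord (Lam x M)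
           \<Longrightarrow> has_type ord \<Omega> (Lam x M) (\<Omega> x \<rightarrow>\<^sub>f \<psi>)"
| ty_App: "has_type ord \<Omega> M (\<chi> \<rightarrow>\<^sub>f \<psi>) \<Longrightarrow> has_type ord \<Omega> N \<chi> \<Longrightarrow> HRM ord (App M N)
           \<Longrightarrow> has_type ord \<Omega> (App M N) \<psi>"

definition NF_inhabited :: "('v \<Rightarrow> nat) \<Rightarrow> ('v \<Rightarrow> 'a form) \<Rightarrow> 'a form \<Rightarrow> bool" where
  "NF_inhabited ord \<Omega> \<phi> \<longleftrightarrow>
     (\<exists>M. wf_term M \<and> closed M \<and> beta_normal M \<and> has_type ord \<Omega> M \<phi>)"

end

theory Submission
  imports Defs
begin


lemma sl_Max:
  fixes S :: "nat set"
  assumes "finite S" "S \<noteq> {}"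
  shows "sorted_list_of_set S = sorted_list_of_set (S - {Max S}) @ [Max S]"
proof -
  let ?l = "sorted_list_of_set (S - {Max S}) @ [Max S]"
  have fin: "finite (S - {Max S})" using assms by simp
  have a: "\<forall>x\<in>S - {Max S}. x < Max S" using assms
    by (metis DiffE Max_ge insertI1 le_neq_implies_less)
  have "sorted_wrt (<) ?l" using fin a
    by (simp add: sorted_wrt_append sorted_list_of_set.strict_sorted_key_list_of_set)
  moreover have "set ?l = S" using fin assms Max_in by auto
  moreover have "length ?l = card S" using fin assms
    by (simp add: card_Diff_singleton Max_in) (metis Suc_pred card_gt_0_iff)
  ultimately show ?thesis
    using sorted_list_of_set_unique[of S ?l] assms by simp
qed

definition Ar :: "(nat \<Rightarrow> 'a form) \<Rightarrow> nat set \<Rightarrow> 'a form \<Rightarrow> 'a form" where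
  "Ar G S \<phi> = foldr (\<lambda>n \<psi>. G n \<rightarrow>\<^sub>f \<psi>) (sorted_list_of_set S) \<phi>"

lemma Ar_empty[simp]: "Ar G {} \<phi> = \<phi>" by (simp add: Ar_def)

lemma Ar_Max: "finite S \<Longrightarrow> S \<noteq> {} \<Longrightarrow> Ar G S \<phi> = Ar G (S - {Max S}) (G (Max S) \<rightarrow>\<^sub>f \<phi>)"
  unfolding Ar_def by (simp add: sl_Max[of S])

abbreviation D where "D \<phi> \<equiv> BBIW_derivable \<phi>"

lemma pre: "D (X \<rightarrow>\<^sub>f Y) \<Longrightarrow> D ((C \<rightarrow>\<^sub>f X) \<rightarrow>\<^sub>f (C \<rightarrow>\<^sub>f Y))"
  by (rule mp[OF ax_B])
lemma suf: "D (X \<rightarrow>\<^sub>f Y) \<Longrightarrow> D ((Y \<rightarrow>\<^sub>f Z) \<rightarrow>\<^sub>f (X \<rightarrow>\<^sub>f Z))"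
  by (rule mp[OF ax_B'])
lemma trans: "D (X \<rightarrow>\<^sub>f Y) \<Longrightarrow> D (Y \<rightarrow>\<^sub>f Z) \<Longrightarrow> D (X \<rightarrow>\<^sub>f Z)"
  by (rule mp[OF suf])

lemma S_thm: "D ((C \<rightarrow>\<^sub>f (A \<rightarrow>\<^sub>f B)) \<rightarrow>\<^sub>f ((C \<rightarrow>\<^sub>f A) \<rightarrow>\<^sub>f (C \<rightarrow>\<^sub>f B)))"
proof -
  have 1: "D ((C \<rightarrow>\<^sub>f (A \<rightarrow>\<^sub>f B)) \<rightarrow>\<^sub>f (((A \<rightarrow>\<^sub>f B) \<rightarrow>\<^sub>f (C \<rightarrow>\<^sub>f B)) \<rightarrow>\<^sub>f (C \<rightarrow>\<^sub>f (C \<rightarrow>\<^sub>f B))))"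
    by (rule ax_B')
  have 2: "D ((((A \<rightarrow>\<^sub>f B) \<rightarrow>\<^sub>f (C \<rightarrow>\<^sub>f B)) \<rightarrow>\<^sub>f (C \<rightarrow>\<^sub>f (C \<rightarrow>\<^sub>f B))) \<rightarrow>\<^sub>f ((C \<rightarrow>\<^sub>f A) \<rightarrow>\<^sub>f (C \<rightarrow>\<^sub>f (C \<rightarrow>\<^sub>f B))))"
    by (rule suf, rule ax_B')
  have 3: "D (((C \<rightarrow>\<^sub>f A) \<rightarrow>\<^sub>f (C \<rightarrow>\<^sub>f (C \<rightarrow>\<^sub>f B))) \<rightarrow>\<^sub>f ((C \<rightarrow>\<^sub>f A) \<rightarrow>\<^sub>f (C \<rightarrow>\<^sub>f B)))"
    by (rule pre, rule ax_W)
  show ?thesis by (rule trans[OF trans[OF 1 2] 3])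
qed

lemma S'_thm: "D ((C \<rightarrow>\<^sub>f A) \<rightarrow>\<^sub>f ((C \<rightarrow>\<^sub>f (A \<rightarrow>\<^sub>f B)) \<rightarrow>\<^sub>f (C \<rightarrow>\<^sub>f B)))"
proof -
  have 1: "D ((C \<rightarrow>\<^sub>f A) \<rightarrow>\<^sub>f ((A \<rightarrow>\<^sub>f B) \<rightarrow>\<^sub>f (C \<rightarrow>\<^sub>f B)))" by (rule ax_B')
  have 2: "D (((A \<rightarrow>\<^sub>f B) \<rightarrow>\<^sub>f (C \<rightarrow>\<^sub>f B)) \<rightarrow>\<^sub>f ((C \<rightarrow>\<^sub>f (A \<rightarrow>\<^sub>f B)) \<rightarrow>\<^sub>f (C \<rightarrow>\<^sub>f (C \<rightarrow>\<^sub>f B))))"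
    by (rule ax_B)
  have 3: "D (((C \<rightarrow>\<^sub>f (A \<rightarrow>\<^sub>f B)) \<rightarrow>\<^sub>f (C \<rightarrow>\<^sub>f (C \<rightarrow>\<^sub>f B))) \<rightarrow>\<^sub>f ((C \<rightarrow>\<^sub>f (A \<rightarrow>\<^sub>f B)) \<rightarrow>\<^sub>f (C \<rightarrow>\<^sub>f B)))"
    by (rule pre, rule ax_W)
  show ?thesis by (rule trans[OF trans[OF 1 2] 3])
qed

lemma cong_list: "D (X \<rightarrow>\<^sub>f Y) \<Longrightarrow> D (foldr (\<lambda>n \<psi>. G n \<rightarrow>\<^sub>f \<psi>) xs X \<rightarrow>\<^sub>f foldr (\<lambda>n \<psi>. G n \<rightarrow>\<^sub>f \<psi>) xs Y)"
  by (induction xs) (auto intro: pre)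

lemma Ar_mono: "D (X \<rightarrow>\<^sub>f Y) \<Longrightarrow> D (Ar G S X) \<Longrightarrow> D (Ar G S Y)"
  unfolding Ar_def using cong_list mp by blast

lemma merge:
  assumes "finite M" "finite N" "D (Ar G M (A \<rightarrow>\<^sub>f B))" "D (Ar G N A)"
    "M = {} \<or> (N \<noteq> {} \<and> Max M \<le> Max N)"
  shows "D (Ar G (M \<union> N) B)"
  using assms
proof (induction "card (M \<union> N)" arbitrary: M N A B rule: less_induct)
  case less
  show ?case
  proof (cases "M = {}")
    case True
    then show ?thesis using less.prems Ar_mono[of A B G N] by simp
  next
    case Mne: False
    with less.prems have Nne: "N \<noteq> {}" and MN: "Max M \<le> Max N" by auto
    define x where "x = Max N"
    define N' where "N' = N - {x}"
    have fin: "finite N'" "finite M" using less.prems N'_def by auto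
    have xN: "x \<in> N" using Nne less.prems x_def Max_in by auto
    have DN': "D (Ar G N' (G x \<rightarrow>\<^sub>f A))" using less.prems Nne Ar_Max[of N G A] x_def N'_def by simp
    have MaxU: "Max (M \<union> N) = x" using Mne Nne less.prems MN x_def by (simp add: Max_Un)
    have goal: "D (Ar G (M \<union> N) B) = D (Ar G ((M \<union> N) - {x}) (G x \<rightarrow>\<^sub>f B))"
      using Ar_Max[of "M \<union> N" G B] MaxU less.prems Nne by simp
    have Mx: "\<forall>y\<in>M. y \<le> x" using MN x_def less.prems Max_ge by fastforce
    show ?thesis
    proof (cases "x \<in> M")
      case False
      have U: "(M \<union> N) - {x} = M \<union> N'" using False N'_def by auto
      have card: "card (M \<union> N') < card (M \<union> N)"
        using less.prems xN U
        by (metis Diff_subset card_Diff1_less finite_Un UnI2)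
      show ?thesis
      proof (cases "N' \<noteq> {} \<and> Max M \<le> Max N'")
        case True
        have DM: "D (Ar G M ((G x \<rightarrow>\<^sub>f A) \<rightarrow>\<^sub>f (G x \<rightarrow>\<^sub>f B)))"
          using less.prems(3) Ar_mono ax_B by blast
        have "D (Ar G (M \<union> N') (G x \<rightarrow>\<^sub>f B))"
          using less.hyps[OF card fin(2) fin(1) DM DN'] True by blast
        then show ?thesis using goal U by simp
      next
        case c2: False
        have DN2: "D (Ar G N' ((A \<rightarrow>\<^sub>f B) \<rightarrow>\<^sub>f (G x \<rightarrow>\<^sub>f B)))"
          using DN' Ar_mono ax_B' by blast
        have cond: "N' = {} \<or> (M \<noteq> {} \<and> Max N' \<le> Max M)" using c2 Mne by auto
        have card': "card (N' \<union> M) < card (M \<union> N)" using card by (simp add: Un_commute)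
        have "D (Ar G (N' \<union> M) (G x \<rightarrow>\<^sub>f B))"
          using less.hyps[OF card' fin(1) fin(2) DN2 less.prems(3)] cond by blast
        then show ?thesis using goal U by (simp add: Un_commute)
      qed
    next
      case True
      define M' where "M' = M - {x}"
      have MaxM: "Max M = x" using True Mx less.prems by (meson Max_eqI)
      have DM': "D (Ar G M' (G x \<rightarrow>\<^sub>f (A \<rightarrow>\<^sub>f B)))"
        using less.prems(3) Mne Ar_Max[of M G "A \<rightarrow>\<^sub>f B"] MaxM M'_def less.prems by simp
      have finM': "finite M'" using M'_def less.prems by simp
      have U: "(M \<union> N) - {x} = M' \<union> N'" using M'_def N'_def by auto
      have card: "card (M' \<union> N') < card (M \<union> N)"
        using less.prems xN U
        by (metis Diff_subset card_Diff1_less finite_Un UnI2)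
      show ?thesis
      proof (cases "M' = {} \<or> (N' \<noteq> {} \<and> Max M' \<le> Max N')")
        case True
        have DM2: "D (Ar G M' ((G x \<rightarrow>\<^sub>f A) \<rightarrow>\<^sub>f (G x \<rightarrow>\<^sub>f B)))"
          using DM' Ar_mono S_thm by blast
        have "D (Ar G (M' \<union> N') (G x \<rightarrow>\<^sub>f B))"
          using less.hyps[OF card finM' fin(1) DM2 DN'] True by blast
        then show ?thesis using goal U by simp
      next
        case c2: False
        have DN2: "D (Ar G N' ((G x \<rightarrow>\<^sub>f (A \<rightarrow>\<^sub>f B)) \<rightarrow>\<^sub>f (G x \<rightarrow>\<^sub>f B)))"
          using DN' Ar_mono S'_thm by blast
        have cond: "N' = {} \<or> (M' \<noteq> {} \<and> Max N' \<le> Max M')" using c2 by auto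
        have card': "card (N' \<union> M') < card (M \<union> N)" using card by (simp add: Un_commute)
        have "D (Ar G (N' \<union> M') (G x \<rightarrow>\<^sub>f B))"
          using less.hyps[OF card' fin(1) finM' DN2 DM'] cond by blast
        then show ?thesis using goal U by (simp add: Un_commute)
      qed
    qed
  qed
qed


lemma finite_FV: "finite (FV M)" by (induction M) auto

lemma typed_HRM: "has_type ord \<Omega> M \<psi> \<Longrightarrow> HRM ord M"
  by (induction rule: has_type.induct) (auto intro: HRM.intros)

lemma typed_D:
  assumes inj: "inj ord"
  shows "has_type ord \<Omega> M \<psi> \<Longrightarrow> D (Ar (\<lambda>n. \<Omega> (inv ord n)) (ord ` FV M) \<psi>)"
proof (induction rule: has_type.induct)
  case (ty_Var x)
  show ?case using inj by (simp add: Ar_def ax_I)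
next
  case (ty_Lam M \<psi> x)
  let ?G = "\<lambda>n. \<Omega> (inv ord n)"
  have g: "greatest_fv ord x M" using ty_Lam.hyps by (auto elim: HRM.cases)
  hence xin: "x \<in> FV M" and le: "\<forall>y\<in>FV M. ord y \<le> ord x" by (auto simp: greatest_fv_def)
  have fin: "finite (ord ` FV M)" by (rule finite_imageI[OF finite_FV])
  have ne: "ord ` FV M \<noteq> {}" using xin by auto
  have mx: "Max (ord ` FV M) = ord x" using xin le fin by (intro Max_eqI) auto
  have im: "ord ` FV M - {ord x} = ord ` (FV M - {x})" using inj
    by (metis image_empty image_insert image_set_diff)
  have "Ar ?G (ord ` FV M) \<psi> = Ar ?G (ord ` (FV M - {x})) (\<Omega> x \<rightarrow>\<^sub>f \<psi>)"
    using Ar_Max[OF fin ne, of ?G \<psi>] mx im inj by simp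
  then show ?case using ty_Lam.IH by simp
next
  case (ty_App M \<chi> \<psi> N)
  let ?G = "\<lambda>n. \<Omega> (inv ord n)"
  have c: "\<forall>x\<in>FV M. \<exists>y\<in>FV N. ord x \<le> ord y" using ty_App.hyps by (auto elim: HRM.cases)
  have cond: "ord ` FV M = {} \<or> (ord ` FV N \<noteq> {} \<and> Max (ord ` FV M) \<le> Max (ord ` FV N))"
  proof (cases "FV M = {}")
    case False
    have fin: "finite (ord ` FV M)" by (rule finite_imageI[OF finite_FV])
    have "Max (ord ` FV M) \<in> ord ` FV M" using Max_in[OF fin] False by blast
    then obtain x where x: "x \<in> FV M" "Max (ord ` FV M) = ord x" by blast
    then obtain y where y: "y \<in> FV N" "ord x \<le> ord y" using c by blast
    have m: "ord y \<le> Max (ord ` FV N)" using y(1) by (intro Max_ge[OF finite_imageI[OF finite_FV]]) blast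
    have ne: "ord ` FV N \<noteq> {}" using y(1) by blast
    have "Max (ord ` FV M) \<le> Max (ord ` FV N)" using x(2) y(2) m by linarith
    then show ?thesis using ne by blast
  qed simp
  have "D (Ar ?G (ord ` FV M \<union> ord ` FV N) \<psi>)"
    using merge[OF finite_imageI[OF finite_FV] finite_imageI[OF finite_FV] ty_App.IH(1) ty_App.IH(2) cond] .
  then show ?case by (simp add: image_Un)
qed

lemma inhabited_derivable:
  assumes "inj ord" "NF_inhabited ord \<Omega> \<phi>" shows "BBIW_derivable \<phi>"
proof -
  obtain M where "closed M" "has_type ord \<Omega> M \<phi>" using assms(2) by (auto simp: NF_inhabited_def)
  then show ?thesis using typed_D[OF assms(1)] by (fastforce simp: closed_def)
qed



locale L =
  fixes ord :: "'v \<Rightarrow> nat" and \<Omega> :: "'v \<Rightarrow> 'a form"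
  assumes inj: "inj ord" and inf: "\<And>\<psi>. infinite (\<Omega> -` {\<psi>})"
begin

definition goodT where
  "goodT M N A \<longleftrightarrow> has_type ord \<Omega> M A \<and> FV M = N \<and> wf_term M \<and> beta_normal M"

definition ne where
  "ne N A \<longleftrightarrow> (\<forall>F. finite F \<longrightarrow> (\<exists>M. goodT M N A \<and> (\<forall>x P. M \<noteq> Lam x P) \<and> set (binders M) \<inter> F = {}))"

definition nf where
  "nf N A \<longleftrightarrow> (\<forall>F. finite F \<longrightarrow> (\<exists>M. goodT M N A \<and> set (binders M) \<inter> F = {}))"

definition cnd where "cnd a b \<longleftrightarrow> (\<forall>x\<in>a. \<exists>y\<in>b. ord x \<le> ord y)"

fun sem :: "'a form \<Rightarrow> 'v set \<Rightarrow> bool" where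
  "sem (Atom p) N = ne N (Atom p)"
| "sem (A \<rightarrow>\<^sub>f B) N = (\<forall>b. finite b \<longrightarrow> sem A b \<longrightarrow> cnd N b \<longrightarrow> sem B (N \<union> b))"

lemma fresh: assumes "finite X" shows "\<exists>i. \<Omega> i = A \<and> (\<forall>y\<in>X. ord y < ord i)"
proof -
  have ij: "inj_on ord (\<Omega> -` {A})" by (rule inj_on_subset[OF inj subset_UNIV])
  have inf': "infinite (ord ` (\<Omega> -` {A}))" using inf[of A] finite_image_iff[OF ij] by simp
  obtain K where K: "\<forall>y\<in>X. ord y \<le> K"
    using assms finite_nat_set_iff_bounded_le[of "ord ` X"] by auto
  have "\<not> ord ` (\<Omega> -` {A}) \<subseteq> {..K}" using inf' finite_subset[OF _ finite_atMost] by blast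
  then obtain x where x: "x \<in> \<Omega> -` {A}" "\<not> ord x \<le> K" by (auto simp: subset_iff)
  show ?thesis
  proof (intro exI[of _ x] conjI)
    show "\<Omega> x = A" using x(1) by simp
    show "\<forall>y\<in>X. ord y < ord x"
    proof
      fix y assume "y \<in> X" then have "ord y \<le> K" using K by blast
      then show "ord y < ord x" using x(2) by simp
    qed
  qed
qed

lemma ne_nf: "ne N A \<Longrightarrow> nf N A"
  unfolding ne_def nf_def by blast

lemma ne_var: "ne {i} (\<Omega> i)"
  unfolding ne_def goodT_def wf_term_def
  by (intro allI impI exI[of _ "Var i"]) (auto intro: has_type.intros)

lemma app:
  assumes "ne N1 (A \<rightarrow>\<^sub>f B)" "nf N2 A" "cnd N1 N2" "finite N2"
  shows "ne (N1 \<union> N2) B"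
  unfolding ne_def
proof (intro allI impI)
  fix F :: "'v set" assume F: "finite F"
  have f1: "finite (F \<union> N2)" using F assms(4) by simp
  have "\<exists>M. goodT M N1 (A \<rightarrow>\<^sub>f B) \<and> (\<forall>x P. M \<noteq> Lam x P) \<and> set (binders M) \<inter> (F \<union> N2) = {}"
    using spec[OF assms(1)[unfolded ne_def], of "F \<union> N2"] f1 by (rule HOL.mp)
  then obtain M1 where M1: "goodT M1 N1 (A \<rightarrow>\<^sub>f B)" "\<forall>x P. M1 \<noteq> Lam x P"
    "set (binders M1) \<inter> (F \<union> N2) = {}" by (elim exE conjE)
  have f2: "finite (F \<union> FV M1 \<union> set (binders M1))" using F finite_FV[of M1] by simp
  have "\<exists>M. goodT M N2 A \<and> set (binders M) \<inter> (F \<union> FV M1 \<union> set (binders M1)) = {}"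
    using spec[OF assms(2)[unfolded nf_def], of "F \<union> FV M1 \<union> set (binders M1)"] f2 by (rule HOL.mp)
  then obtain M2 where M2: "goodT M2 N2 A" "set (binders M2) \<inter> (F \<union> FV M1 \<union> set (binders M1)) = {}"
    by (elim exE conjE)
  have h: "HRM ord (App M1 M2)"
  proof (rule HRM_App)
    show "HRM ord M1" using M1(1) typed_HRM unfolding goodT_def by blast
    show "HRM ord M2" using M2(1) typed_HRM unfolding goodT_def by blast
    show "\<forall>x\<in>FV M1. \<exists>y\<in>FV M2. ord x \<le> ord y" using M1(1) M2(1) assms(3) unfolding goodT_def cnd_def by simp
  qed
  show "\<exists>M. goodT M (N1 \<union> N2) B \<and> (\<forall>x P. M \<noteq> Lam x P) \<and> set (binders M) \<inter> F = {}"
  proof (intro exI[of _ "App M1 M2"] conjI)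
    show "goodT (App M1 M2) (N1 \<union> N2) B"
      using M1 M2 h unfolding goodT_def wf_term_def by (auto intro: ty_App)
  qed (use M1 M2 in auto)
qed

lemma lam:
  assumes "\<And>i. \<Omega> i = A \<Longrightarrow> \<forall>y\<in>N. ord y < ord i \<Longrightarrow> nf (insert i N) B" "finite N"
  shows "nf N (A \<rightarrow>\<^sub>f B)"
  unfolding nf_def
proof (intro allI impI)
  fix F :: "'v set" assume F: "finite F"
  obtain i where i: "\<Omega> i = A" "\<forall>y\<in>N \<union> F. ord y < ord i" using fresh[of "N \<union> F" A] F assms(2) by auto
  obtain M where M: "goodT M (insert i N) B" "set (binders M) \<inter> (insert i F) = {}"
  proof -
    have "\<forall>y\<in>N. ord y < ord i" using i(2) by blast
    then have "nf (insert i N) B" using assms(1)[OF i(1)] by blast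
    moreover have "finite (insert i F)" using F by simp
    ultimately show ?thesis using that unfolding nf_def by blast
  qed
  have iN: "i \<notin> N" "i \<notin> F" using i(2) by blast+
  have g: "greatest_fv ord i M" using M(1) i(2) unfolding goodT_def greatest_fv_def
    by (auto intro: less_imp_le)
  have h: "HRM ord (Lam i M)" using g M(1) typed_HRM unfolding goodT_def by (blast intro: HRM_Lam)
  show "\<exists>M. goodT M N (A \<rightarrow>\<^sub>f B) \<and> set (binders M) \<inter> F = {}"
  proof (intro exI[of _ "Lam i M"] conjI)
    show "goodT (Lam i M) N (A \<rightarrow>\<^sub>f B)"
      using M h iN i(1) unfolding goodT_def wf_term_def by (auto intro: ty_Lam)
  qed (use M iN in auto)
qed

lemma semI: "(\<And>b. finite b \<Longrightarrow> sem A b \<Longrightarrow> cnd N b \<Longrightarrow> sem B (N \<union> b)) \<Longrightarrow> sem (A \<rightarrow>\<^sub>f B) N"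
  by simp
lemma semE: "sem (A \<rightarrow>\<^sub>f B) N \<Longrightarrow> finite b \<Longrightarrow> sem A b \<Longrightarrow> cnd N b \<Longrightarrow> sem B (N \<union> b)"
  by simp

lemma reflect_reify: "finite N \<Longrightarrow> (ne N A \<longrightarrow> sem A N) \<and> (sem A N \<longrightarrow> nf N A)"
proof (induction A arbitrary: N)
  case (Atom p)
  then show ?case by (simp add: ne_nf)
next
  case (Imp A B)
  show ?case
  proof (intro conjI impI)
    assume n: "ne N (A \<rightarrow>\<^sub>f B)"
    show "sem (A \<rightarrow>\<^sub>f B) N"
    proof (simp, intro allI impI)
      fix b assume b: "finite b" "sem A b" "cnd N b"
      have "nf b A" using Imp.IH(1) b by blast
      then have "ne (N \<union> b) B" using app n b by blast
      then show "sem B (N \<union> b)" using Imp.IH(2) b Imp.prems by blast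
    qed
  next
    assume s: "sem (A \<rightarrow>\<^sub>f B) N"
    show "nf N (A \<rightarrow>\<^sub>f B)"
    proof (rule lam[OF _ Imp.prems])
      fix i assume i: "\<Omega> i = A" "\<forall>y\<in>N. ord y < ord i"
      have "ne {i} A" using ne_var[of i] i by simp
      then have "sem A {i}" using Imp.IH(1)[of "{i}"] by simp
      moreover have "cnd N {i}" using i unfolding cnd_def by (auto intro: less_imp_le)
      ultimately have "sem B (N \<union> {i})" using semE[OF s, of "{i}"] by simp
      then show "nf (insert i N) B" using Imp.IH(2)[of "insert i N"] Imp.prems by simp
    qed
  qed
qed

lemma cnd_simps[simp]: "cnd {} b" "cnd (a \<union> b) c \<longleftrightarrow> cnd a c \<and> cnd b c" "cnd a a"
  unfolding cnd_def by auto

lemma cnd_Un: "cnd a b \<Longrightarrow> cnd a (b \<union> c)" "cnd a c \<Longrightarrow> cnd a (b \<union> c)"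
  unfolding cnd_def by auto

lemma sound: "BBIW_derivable \<phi> \<Longrightarrow> sem \<phi> {}"
proof (induction rule: BBIW_derivable.induct)
  case (ax_B \<chi> \<psi> \<phi>)
  show ?case
  proof (rule semI)
    fix a assume a: "finite a" "sem (\<chi> \<rightarrow>\<^sub>f \<psi>) a"
    show "sem ((\<phi> \<rightarrow>\<^sub>f \<chi>) \<rightarrow>\<^sub>f (\<phi> \<rightarrow>\<^sub>f \<psi>)) ({} \<union> a)" unfolding Un_empty_left
    proof (rule semI)
      fix b assume b: "finite b" "sem (\<phi> \<rightarrow>\<^sub>f \<chi>) b" "cnd a b"
      show "sem (\<phi> \<rightarrow>\<^sub>f \<psi>) (a \<union> b)"
      proof (rule semI)
        fix c assume c: "finite c" "sem \<phi> c" "cnd (a \<union> b) c"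
        have "sem \<chi> (b \<union> c)" using semE[OF b(2) c(1,2)] c(3) by simp
        then have "sem \<psi> (a \<union> (b \<union> c))" using semE[OF a(2), of "b \<union> c"] b c cnd_Un by simp
        then show "sem \<psi> (a \<union> b \<union> c)" by (simp add: Un_assoc)
      qed
    qed
  qed
next
  case (ax_B' \<phi> \<chi> \<psi>)
  show ?case
  proof (rule semI)
    fix a assume a: "finite a" "sem (\<phi> \<rightarrow>\<^sub>f \<chi>) a"
    show "sem ((\<chi> \<rightarrow>\<^sub>f \<psi>) \<rightarrow>\<^sub>f (\<phi> \<rightarrow>\<^sub>f \<psi>)) ({} \<union> a)" unfolding Un_empty_left
    proof (rule semI)
      fix b assume b: "finite b" "sem (\<chi> \<rightarrow>\<^sub>f \<psi>) b" "cnd a b"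
      show "sem (\<phi> \<rightarrow>\<^sub>f \<psi>) (a \<union> b)"
      proof (rule semI)
        fix c assume c: "finite c" "sem \<phi> c" "cnd (a \<union> b) c"
        have "sem \<chi> (a \<union> c)" using semE[OF a(2) c(1,2)] c(3) by simp
        then have "sem \<psi> (b \<union> (a \<union> c))" using semE[OF b(2), of "a \<union> c"] a c cnd_Un by simp
        then show "sem \<psi> (a \<union> b \<union> c)" by (simp add: Un_ac)
      qed
    qed
  qed
next
  case (ax_I \<phi>)
  then show ?case by simp
next
  case (ax_W \<phi> \<chi>)
  show ?case
  proof (rule semI)
    fix a assume a: "finite a" "sem (\<phi> \<rightarrow>\<^sub>f \<phi> \<rightarrow>\<^sub>f \<chi>) a"
    show "sem (\<phi> \<rightarrow>\<^sub>f \<chi>) ({} \<union> a)" unfolding Un_empty_left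
    proof (rule semI)
      fix b assume b: "finite b" "sem \<phi> b" "cnd a b"
      have "sem (\<phi> \<rightarrow>\<^sub>f \<chi>) (a \<union> b)" using semE[OF a(2) b] .
      then have "sem \<chi> (a \<union> b \<union> b)" using semE[of \<phi> \<chi> "a \<union> b" b] b by simp
      then show "sem \<chi> (a \<union> b)" by (simp add: Un_assoc)
    qed
  qed
next
  case (mp \<phi> \<psi>)
  then show ?case by simp
qed

lemma derivable_inhabited: "BBIW_derivable \<phi> \<Longrightarrow> NF_inhabited ord \<Omega> \<phi>"
proof -
  assume "BBIW_derivable \<phi>"
  then have "nf {} \<phi>" using sound reflect_reify[of "{}" \<phi>] by simp
  then obtain M where "goodT M {} \<phi>" unfolding nf_def by blast
  then show ?thesis unfolding NF_inhabited_def goodT_def closed_def by blast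
qed

end


theorem lemma1p10:
  fixes ord :: "'v \<Rightarrow> nat" and \<Omega> :: "'v \<Rightarrow> 'a form"
  assumes "infinite (UNIV :: 'v set)"
    and "inj ord"
    and "\<And>\<psi>. infinite (\<Omega> -` {\<psi>})"
  shows "BBIW_derivable \<phi> \<longleftrightarrow> NF_inhabited ord \<Omega> \<phi>"
proof -
  interpret L ord \<Omega> using assms(2,3) by unfold_locales
  show ?thesis using derivable_inhabited inhabited_derivable[OF assms(2)] by blast
qed

end
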